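(* Let $\beta$ be complex with $\Re(\beta)>0$ and let $a,c$ be real numbers such that $c-a(a+t)>0$, $c-(a+1)(a+t)>0$ and $c-(a+t)^2>0$ for all $t\in[0,1]$. Then \[ \frac{\Gamma(\beta)\Gamma(\beta)}{2\,\Gamma(2\beta)}=(c-(a+1)^2)\int_0^1\frac{(c-a(a+t))^{\beta}\,(c-(a+1)(a+t))^{\beta-1}}{(c-(a+t)^2)^{2\beta}}\,t^{\beta}(1-t)^{\beta-1}\,dt . \]
   Context: Powers of positive reals are principal powers. *)

theory Defs
  imports "HOL-Analysis.Analysis"
begin

end

theory Submission
  imports Defs
begin


lemma cpow_pos: "p > 0 \<Longrightarrow> complex_of_real p powr z = exp (z * of_real (ln p))"
  by (simp add: powr_def Ln_of_real)

lemma norm_cpow_pos: "p \<ge> 0 \<Longrightarrow> norm (complex_of_real p powr z) = p powr Re z"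
  by (simp add: norm_powr_real_powr)

lemma cpow_shift: "p > 0 \<Longrightarrow> complex_of_real p * complex_of_real p powr (z - 2) = complex_of_real p powr (z - 1)"
proof -
  assume p: "p > 0"
  have e: "complex_of_real p = exp (of_real (ln p))" using p by (simp add: exp_of_real)
  have "complex_of_real p * complex_of_real p powr (z - 2) = exp (of_real (ln p)) * exp ((z - 2) * of_real (ln p))"
    by (subst cpow_pos[OF p], subst e, rule refl)
  also have "\<dots> = exp ((z - 1) * of_real (ln p))" by (simp add: exp_add[symmetric] algebra_simps)
  finally show ?thesis using p by (simp add: cpow_pos)
qed

definition gf :: "complex \<Rightarrow> real \<Rightarrow> complex" where
  "gf z t = indicator {0<..} t *\<^sub>R (complex_of_real t powr (z - 1) / complex_of_real (exp t))"

lemma gf_meas_borel [measurable]: "gf z \<in> borel_measurable borel"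
  unfolding gf_def
  by (rule borel_measurable_continuous_on_indicator) (auto intro!: continuous_intros)

lemma gf_meas_lborel [measurable]: "gf z \<in> borel_measurable lborel"
  using gf_meas_borel by simp

lemma gf_Gamma:
  assumes "Re z > 0"
  shows "integrable lborel (gf z)" "integral\<^sup>L lborel (gf z) = Gamma z"
proof -
  have "(\<lambda>t. complex_of_real t powr (z - 1) / of_real (exp t)) absolutely_integrable_on {0<..}"
    by (rule absolutely_integrable_Gamma_integral'[OF assms])
  hence "integrable lebesgue (gf z)"
    unfolding set_integrable_def gf_def by simp
  thus *: "integrable lborel (gf z)"
    by (subst (asm) integrable_completion) auto
  have "(gf z has_integral integral\<^sup>L lborel (gf z)) UNIV"
    by (rule has_integral_integral_lborel[OF *])
  moreover have "(gf z has_integral Gamma z) UNIV"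
  proof -
    have "((\<lambda>t. if t \<in> {0<..} then complex_of_real t powr (z - 1) / of_real (exp t) else 0)
            has_integral Gamma z) UNIV"
      using Gamma_integral_complex'[OF assms] by (simp only: has_integral_restrict_UNIV)
    moreover have "gf z = (\<lambda>t. if t \<in> {0<..} then complex_of_real t powr (z - 1) / of_real (exp t) else 0)"
      by (auto simp: gf_def fun_eq_iff indicator_def)
    ultimately show ?thesis by simp
  qed
  ultimately show "integral\<^sup>L lborel (gf z) = Gamma z"
    by (rule has_integral_unique)
qed

definition bf :: "complex \<Rightarrow> complex \<Rightarrow> real \<Rightarrow> complex" where
  "bf x y v = indicator {0<..<1} v *\<^sub>R (complex_of_real v powr (x - 1) * complex_of_real (1 - v) powr (y - 1))"

lemma bf_meas_borel [measurable]: "bf x y \<in> borel_measurable borel"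
  unfolding bf_def
  by (rule borel_measurable_continuous_on_indicator) (auto intro!: continuous_intros)

lemma bf_meas_lborel [measurable]: "bf x y \<in> borel_measurable lborel"
  using bf_meas_borel by simp

lemma bf_integrable:
  assumes "Re x > 0" "Re y > 0"
  shows "integrable lborel (bf x y)"
proof (rule Bochner_Integration.integrable_bound[OF _ _ AE_I2])
  show "integrable lborel (\<lambda>v. indicator {0..1} v *\<^sub>R (v powr (Re x - 1) * (1 - v) powr (Re y - 1)))"
    using integrable_Beta[of "Re x" "Re y"] assms unfolding set_integrable_def by simp
  show "bf x y \<in> borel_measurable lborel" by simp
  fix v :: real
  show "norm (bf x y v) \<le> norm (indicator {0..1} v *\<^sub>R (v powr (Re x - 1) * (1 - v) powr (Re y - 1)))"
    by (auto simp: bf_def indicator_def norm_mult norm_cpow_pos simp del: of_real_diff)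
qed

lemma Gamma_mult_Beta_int:
  assumes x: "Re x > 0" and y: "Re y > 0"
  shows "Gamma x * Gamma y = Gamma (x + y) * integral\<^sup>L lborel (bf x y)"
proof -
  define B where "B = integral\<^sup>L lborel (bf x y)"
  define H where "H = (\<lambda>t u. gf x t * gf y (u - t))"
  have Hmeas: "case_prod H \<in> borel_measurable (lborel \<Otimes>\<^sub>M lborel)"
    unfolding H_def by measurable
  have Hint: "integrable (lborel \<Otimes>\<^sub>M lborel) (case_prod H)"
  proof (rule lborel_pair.Fubini_integrable[OF Hmeas])
    have eq: "(\<integral>u. norm (case_prod H (t, u)) \<partial>lborel) = norm (gf x t) * (\<integral>u. norm (gf y u) \<partial>lborel)" for t
    proof -
      have "(\<integral>u. norm (gf y u) \<partial>lborel) = (\<integral>u. norm (gf y (- t + 1 * u)) \<partial>lborel)"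
        using lborel_integral_real_affine[of 1 "\<lambda>u. norm (gf y u)" "-t"] by simp
      thus ?thesis by (simp add: H_def norm_mult)
    qed
    show "integrable lborel (\<lambda>t. \<integral>u. norm (case_prod H (t, u)) \<partial>lborel)"
      unfolding eq using gf_Gamma(1)[OF x] by (intro integrable_mult_left integrable_norm)
    show "AE t in lborel. integrable lborel (\<lambda>u. case_prod H (t, u))"
    proof (rule AE_I2)
      fix t
      have "integrable lborel (\<lambda>u. gf y (- t + 1 * u))"
        by (rule lborel_integrable_real_affine[OF gf_Gamma(1)[OF y]]) simp
      thus "integrable lborel (\<lambda>u. case_prod H (t, u))"
        unfolding H_def by (simp add: integrable_mult_right)
    qed
  qed
  have "Gamma x * Gamma y = (\<integral>t. gf x t * (\<integral>u. gf y u \<partial>lborel) \<partial>lborel)"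
    using gf_Gamma[OF x] gf_Gamma[OF y] by simp
  also have "\<dots> = (\<integral>t. (\<integral>u. H t u \<partial>lborel) \<partial>lborel)"
  proof (rule Bochner_Integration.integral_cong[OF refl])
    fix t
    have "(\<integral>u. gf y u \<partial>lborel) = (\<integral>u. gf y (-t + 1*u) \<partial>lborel)"
      using lborel_integral_real_affine[of 1 "gf y" "-t"] by simp
    thus "gf x t * (\<integral>u. gf y u \<partial>lborel) = (\<integral>u. H t u \<partial>lborel)"
      by (simp add: H_def)
  qed
  also have "\<dots> = (\<integral>u. (\<integral>t. H t u \<partial>lborel) \<partial>lborel)"
    by (rule lborel_pair.Fubini_integral[symmetric, OF Hint])
  also have "\<dots> = (\<integral>u. gf (x + y) u * B \<partial>lborel)"
  proof (rule Bochner_Integration.integral_cong[OF refl])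
    fix u :: real
    show "(\<integral>t. H t u \<partial>lborel) = gf (x + y) u * B"
    proof (cases "u > 0")
      case True
      have "(\<integral>t. H t u \<partial>lborel) = \<bar>u\<bar> *\<^sub>R (\<integral>v. H (0 + u * v) u \<partial>lborel)"
        by (rule lborel_integral_real_affine) (use True in auto)
      also have "(\<lambda>v. H (0 + u * v) u) = (\<lambda>v. (complex_of_real u powr (x + y - 2) / of_real (exp u)) * bf x y v)"
      proof
        fix v :: real
        show "H (0 + u * v) u = (complex_of_real u powr (x + y - 2) / of_real (exp u)) * bf x y v"
        proof (cases "v \<in> {0<..<1}")
          case True
          hence v: "0 < v" "v < 1" by auto
          have uv: "u * v > 0" "u - u * v > 0" using v \<open>u > 0\<close> by (auto simp: algebra_simps)
          have l1: "ln (u * v) = ln u + ln v" using v \<open>u > 0\<close> by (simp add: ln_mult)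
          have "u - u * v = u * (1 - v)" by (simp add: algebra_simps)
          hence l2: "ln (u - u * v) = ln u + ln (1 - v)" using v \<open>u > 0\<close> by (simp add: ln_mult)
          show ?thesis using True uv v \<open>u > 0\<close>
            by (simp add: H_def gf_def bf_def cpow_pos l1 l2 exp_of_real[symmetric] exp_add[symmetric]
                   exp_diff[symmetric] algebra_simps del: of_real_diff of_real_mult) (simp add: algebra_simps)
        next
          case False
          hence "v \<le> 0 \<or> v \<ge> 1" by auto
          hence "u * v \<le> 0 \<or> u - u * v \<le> 0" using \<open>u > 0\<close>
            by (auto simp: mult_nonneg_nonpos mult_left_mono)
          thus ?thesis using False by (auto simp: H_def gf_def bf_def)
        qed
      qed
      finally show ?thesis using True
        by (simp add: B_def gf_def cpow_shift[symmetric, OF True] scaleR_conv_of_real mult_ac)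
    next
      case False
      have "H t u = 0" for t
        using False by (cases "t > 0") (auto simp: H_def gf_def)
      thus ?thesis using False by (simp add: gf_def)
    qed
  qed
  also have "\<dots> = Gamma (x + y) * B"
    using gf_Gamma[of "x + y"] x y by simp
  finally show ?thesis by (simp add: B_def)
qed


lemma Gamma_sum_nz:
  assumes "Re x > 0" "Re y > 0"
  shows "Gamma (x + y) \<noteq> 0"
proof
  assume "Gamma (x + y) = 0"
  hence "x + y \<in> \<int>\<^sub>\<le>\<^sub>0" by (simp add: Gamma_eq_zero_iff)
  then obtain n :: int where "x + y = of_int n" "n \<le> 0" by (elim nonpos_Ints_cases)
  hence "Re (x + y) \<le> 0" by simp
  thus False using assms by simp
qed

lemma Beta_sym_integral:
  assumes "Re b > 0"
  shows "(\<lambda>v. complex_of_real (v * (1 - v)) powr (b - 1)) absolutely_integrable_on {0<..<1}"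
    "integral {0<..<1} (\<lambda>v. complex_of_real (v * (1 - v)) powr (b - 1)) = Beta b b"
proof -
  let ?P = "\<lambda>v. complex_of_real (v * (1 - v)) powr (b - 1)"
  have eq: "(\<lambda>v. indicator {0<..<1} v *\<^sub>R ?P v) = bf b b"
  proof
    fix v :: real
    show "indicator {0<..<1} v *\<^sub>R ?P v = bf b b v"
    proof (cases "v \<in> {0<..<1}")
      case True
      hence "?P v = complex_of_real v powr (b - 1) * complex_of_real (1 - v) powr (b - 1)"
        by (subst of_real_mult, subst powr_times_real) auto
      thus ?thesis using True by (simp add: bf_def del: of_real_diff)
    qed (simp add: bf_def)
  qed
  have int: "integrable lborel (bf b b)" by (rule bf_integrable) (use assms in auto)
  hence "integrable lebesgue (bf b b)" by (subst integrable_completion) auto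
  thus ai: "?P absolutely_integrable_on {0<..<1}"
    unfolding set_integrable_def eq .
  have "integral {0<..<1} ?P = (LINT v:{0<..<1}|lebesgue. ?P v)"
    by (rule set_lebesgue_integral_eq_integral(2)[OF ai, symmetric])
  also have "\<dots> = integral\<^sup>L lebesgue (bf b b)"
    unfolding set_lebesgue_integral_def eq ..
  also have "\<dots> = integral\<^sup>L lborel (bf b b)" by (rule integral_completion) simp
  also have "\<dots> = Beta b b"
    using Gamma_mult_Beta_int[OF assms assms] Gamma_sum_nz[OF assms assms]
    by (simp add: Beta_def field_simps)
  finally show "integral {0<..<1} ?P = Beta b b" .
qed

lemma reflect01:
  fixes f :: "real \<Rightarrow> complex"
  assumes "f absolutely_integrable_on {0<..<1}"
  shows "(\<lambda>v. f (1 - v)) absolutely_integrable_on {0<..<1}"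
    "integral {0<..<1} (\<lambda>v. f (1 - v)) = integral {0<..<1} f"
proof -
  have img: "(\<lambda>v. 1 - v) ` {0<..<1::real} = {0<..<1}"
  proof
    show "{0<..<1} \<subseteq> (\<lambda>v. 1 - v) ` {0<..<1::real}"
    proof
      fix x :: real assume "x \<in> {0<..<1}"
      thus "x \<in> (\<lambda>v. 1 - v) ` {0<..<1}" by (intro image_eqI[of _ _ "1 - x"]) auto
    qed
  qed auto
  have "(\<lambda>x. \<bar>-1\<bar> *\<^sub>R f (1 - x)) absolutely_integrable_on {0<..<1} \<and>
        integral {0<..<1} (\<lambda>x. \<bar>-1\<bar> *\<^sub>R f (1 - x)) = integral {0<..<1} f
     \<longleftrightarrow> f absolutely_integrable_on (\<lambda>v. 1 - v) ` {0<..<1} \<and>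
        integral ((\<lambda>v. 1 - v) ` {0<..<1}) f = integral {0<..<1} f"
    by (rule has_absolute_integral_change_of_variables_real)
       (auto intro!: derivative_eq_intros simp: inj_on_def)
  thus "(\<lambda>v. f (1 - v)) absolutely_integrable_on {0<..<1}"
    "integral {0<..<1} (\<lambda>v. f (1 - v)) = integral {0<..<1} f"
    using assms unfolding img by simp_all
qed




context
  fixes a c :: real
  assumes hX: "\<And>t. t \<in> {0..1} \<Longrightarrow> c - a * (a + t) > 0"
    and hY: "\<And>t. t \<in> {0..1} \<Longrightarrow> c - (a + 1) * (a + t) > 0"
    and hD: "\<And>t. t \<in> {0..1} \<Longrightarrow> c - (a + t)^2 > 0"
begin

definition "XX t = c - a * (a + t)"
definition "YY t = c - (a + 1) * (a + t)"
definition "DD t = c - (a + t)^2"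
definition "KK = c - (a + 1)^2"
definition "E0 = c - a * (a + 1)"
definition "uu t = (1 - t) * XX t / DD t"
definition "SS t = E0 * DD t - 2 * c * t * (1 - t)"

lemma id1: "DD t - (1 - t) * XX t = t * YY t"
  unfolding DD_def XX_def YY_def by (simp add: algebra_simps power2_eq_square)

lemma id2: "E0 * DD t - c * t * (1 - t) = XX t * YY t"
  unfolding DD_def XX_def YY_def E0_def by (simp add: algebra_simps power2_eq_square)

lemma id4: "2 * KK * t * XX t = SS t - E0 * (2 * ((1 - t) * XX t) - DD t)"
  unfolding DD_def XX_def YY_def E0_def SS_def KK_def by (simp add: algebra_simps power2_eq_square)

lemma E0_sq: "E0^2 - c = DD 0 * DD 1"
  unfolding DD_def E0_def by (simp add: algebra_simps power2_eq_square)

lemma pos_basic: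
  assumes "t \<in> {0..1}"
  shows "XX t > 0" "YY t > 0" "DD t > 0"
  using hX[OF assms] hY[OF assms] hD[OF assms] by (auto simp: XX_def YY_def DD_def)

lemma c_pos: "c > 0"
proof -
  have "c - a^2 > 0" using hD[of 0] by simp
  moreover have "a^2 \<ge> 0" by simp
  moreover have "c - (a+1)^2 > 0" using hD[of 1] by simp
  moreover have "(a+1)^2 \<ge> 0" by simp
  ultimately show ?thesis by linarith
qed

lemma E0_pos: "E0 > 0" using hX[of 1] by (simp add: E0_def)
lemma KK_pos: "KK > 0" using hD[of 1] by (simp add: KK_def)

lemma id3: "SS t ^ 2 = E0^2 * DD t ^ 2 - 4 * c * (t * (1 - t)) * (XX t * YY t)"
  unfolding SS_def by (subst id2[symmetric]) (simp add: algebra_simps power2_eq_square)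

lemma key_ineq:
  assumes "t \<in> {0..1}"
  shows "4 * (t * (1 - t)) * (XX t * YY t) \<le> DD t ^ 2"
proof -
  have "4 * ((1 - t) * XX t) * (t * YY t) \<le> ((1 - t) * XX t + t * YY t) ^ 2"
  proof -
    have e: "\<And>p q :: real. (p + q)^2 - 4 * p * q = (p - q)^2" by (simp add: power2_eq_square algebra_simps)
    show ?thesis using e[of "(1 - t) * XX t" "t * YY t"] zero_le_power2[of "(1 - t) * XX t - t * YY t"]
      by linarith
  qed
  also have "(1 - t) * XX t + t * YY t = DD t" using id1[of t] by linarith
  finally show ?thesis by (simp add: algebra_simps)
qed

lemma SS_sq_pos:
  assumes "t \<in> {0..1}"
  shows "SS t ^ 2 \<ge> (E0^2 - c) * DD t ^ 2" "SS t ^ 2 > 0"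
proof -
  have "c * (4 * (t * (1 - t)) * (XX t * YY t)) \<le> c * DD t ^ 2"
    using key_ineq[OF assms] c_pos by (intro mult_left_mono) auto
  thus 1: "SS t ^ 2 \<ge> (E0^2 - c) * DD t ^ 2" unfolding id3 by (simp add: algebra_simps)
  have "E0^2 - c > 0" using E0_sq pos_basic[of 0] pos_basic[of 1] by simp
  moreover have "DD t ^ 2 > 0" using pos_basic(3)[OF assms] by simp
  ultimately have "(E0^2 - c) * DD t ^ 2 > 0" by (rule mult_pos_pos)
  thus "SS t ^ 2 > 0" using 1 by linarith
qed

lemma SS_pos:
  assumes "t \<in> {0..1}"
  shows "SS t > 0"
proof (rule ccontr)
  assume "\<not> SS t > 0"
  hence "SS t \<le> 0" by simp
  moreover have "SS 0 > 0" using E0_pos pos_basic(3)[of 0] by (simp add: SS_def)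
  moreover have "\<forall>x. 0 \<le> x \<and> x \<le> t \<longrightarrow> isCont SS x"
    unfolding SS_def DD_def by (auto intro!: continuous_intros)
  ultimately obtain x where "0 \<le> x" "x \<le> t" "SS x = 0"
    using IVT2[of SS t 0 0] assms by auto
  thus False using SS_sq_pos(2)[of x] assms by auto
qed

lemma uu_props:
  assumes "t \<in> {0<..<1}"
  shows "uu t > 0" "uu t < 1" "1 - uu t = t * YY t / DD t"
    "uu t * (1 - uu t) = t * (1 - t) * XX t * YY t / DD t ^ 2"
proof -
  have t: "t \<in> {0..1}" using assms by auto
  note p = pos_basic[OF t]
  show 1: "1 - uu t = t * YY t / DD t"
    using id1[of t] p by (simp add: uu_def field_simps)
  show "uu t > 0" using p assms by (simp add: uu_def)
  have "t * YY t / DD t > 0" using p assms by simp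
  thus "uu t < 1" using 1 by linarith
  show "uu t * (1 - uu t) = t * (1 - t) * XX t * YY t / DD t ^ 2"
    unfolding 1 using p by (simp add: uu_def field_simps power2_eq_square)
qed

lemma uu_deriv:
  assumes "t \<in> {0..1}"
  shows "(uu has_real_derivative (- SS t / DD t ^ 2)) (at t)"
proof -
  note p = pos_basic[OF assms]
  have "(uu has_real_derivative
     ((-1 * XX t + (1 - t) * (- a)) * DD t - (1 - t) * XX t * (- 2 * (a + t))) / (DD t * DD t)) (at t)"
    unfolding uu_def XX_def[abs_def] DD_def[abs_def] using p
    by (auto intro!: derivative_eq_intros simp: XX_def DD_def power2_eq_square)
  moreover have "((-1 * XX t + (1 - t) * (- a)) * DD t - (1 - t) * XX t * (- 2 * (a + t))) / (DD t * DD t)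
      = - SS t / DD t ^ 2"
    unfolding SS_def XX_def DD_def E0_def by (simp add: algebra_simps power2_eq_square divide_simps)
  ultimately show ?thesis by simp
qed

definition "om v = E0 * (2 * v - 1) / sqrt (E0^2 - 4 * c * (v * (1 - v)))"
definition "FF (\<beta>::complex) v = (1/2) * (complex_of_real (v * (1 - v)) powr (\<beta> - 1)) * (1 - complex_of_real (om v))"
definition "ff (\<beta>::complex) t = (complex_of_real (c - a * (a + t)) powr \<beta>)
            * (complex_of_real (c - (a + 1) * (a + t)) powr (\<beta> - 1))
            / (complex_of_real (c - (a + t)^2) powr (2 * \<beta>))
            * (complex_of_real t powr \<beta>) * (complex_of_real (1 - t) powr (\<beta> - 1))"

lemma om_uu:
  assumes t: "t \<in> {0<..<1}"
  shows "om (uu t) = E0 * (2 * uu t - 1) * DD t / SS t"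
proof -
  have t': "t \<in> {0..1}" using t by auto
  note p = pos_basic[OF t'] SS_pos[OF t']
  have "(SS t / DD t)^2 = E0^2 - 4 * c * (uu t * (1 - uu t))"
    unfolding uu_props(4)[OF t] power_divide id3 using p by (simp add: field_simps)
  hence "sqrt (E0^2 - 4 * c * (uu t * (1 - uu t))) = SS t / DD t"
    using p by (intro real_sqrt_unique) auto
  thus ?thesis unfolding om_def using p by simp
qed

lemma real_id:
  assumes t: "t \<in> {0<..<1}"
  shows "KK * (t * XX t / DD t ^ 2) = (SS t / DD t ^ 2) * ((1/2) * (1 - om (uu t)))"
proof -
  have t': "t \<in> {0..1}" using t by auto
  note p = pos_basic[OF t'] SS_pos[OF t']
  have u: "DD t * uu t = (1 - t) * XX t" using p by (simp add: uu_def)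
  have h: "2 * KK * t * XX t + 2 * E0 * (DD t * uu t) = SS t + E0 * DD t"
    unfolding u using id4[of t] by (simp add: algebra_simps)
  have "(SS t / DD t ^ 2) * ((1/2) * (1 - E0 * (2 * uu t - 1) * DD t / SS t))
        = (SS t - E0 * (2 * uu t - 1) * DD t) / (2 * DD t ^ 2)"
    using p by (simp add: field_simps)
  also have "SS t - E0 * (2 * uu t - 1) * DD t = 2 * KK * t * XX t"
    using h by (simp add: algebra_simps)
  finally have eq: "(SS t / DD t ^ 2) * ((1/2) * (1 - E0 * (2 * uu t - 1) * DD t / SS t))
        = 2 * KK * t * XX t / (2 * DD t ^ 2)" .
  show ?thesis unfolding om_uu[OF t] eq by simp
qed

lemma pointwise:
  assumes t: "t \<in> {0<..<1}"
  shows "complex_of_real KK * ff \<beta> t = \<bar>- SS t / DD t ^ 2\<bar> *\<^sub>R FF \<beta> (uu t)"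
proof -
  have t': "t \<in> {0..1}" using t by auto
  note p = pos_basic[OF t'] SS_pos[OF t']
  have t0: "t > 0" "1 - t > 0" using t by auto
  define R where "R = t * (1 - t) * XX t * YY t / DD t ^ 2"
  have Rpos: "R > 0" using p t0 by (simp add: R_def)
  have l1: "ln (t * (1 - t) * XX t * YY t) = ln t + ln (1 - t) + ln (XX t) + ln (YY t)"
    using p t0 by (simp add: ln_mult)
  have l2: "ln (DD t ^ 2) = 2 * ln (DD t)" using p by (simp add: ln_realpow)
  have "t * (1 - t) * XX t * YY t > 0" using p t0 by simp
  hence lnR: "ln R = ln t + ln (1 - t) + ln (XX t) + ln (YY t) - 2 * ln (DD t)"
    unfolding R_def using p t0 by (subst ln_div) (simp_all add: l1 l2)
  have q: "t * XX t / DD t ^ 2 = exp (ln t + ln (XX t) - 2 * ln (DD t))"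
    unfolding l2[symmetric] exp_diff exp_add using p t0 by simp
  have e1: "complex_of_real (c - a * (a + t)) powr \<beta> = exp (\<beta> * of_real (ln (XX t)))"
    using cpow_pos[OF p(1), of \<beta>] unfolding XX_def .
  have e2: "complex_of_real (c - (a + 1) * (a + t)) powr (\<beta> - 1) = exp ((\<beta> - 1) * of_real (ln (YY t)))"
    using cpow_pos[OF p(2), of "\<beta> - 1"] unfolding YY_def .
  have e3: "complex_of_real (c - (a + t)^2) powr (2 * \<beta>) = exp (2 * \<beta> * of_real (ln (DD t)))"
    using cpow_pos[OF p(3), of "2 * \<beta>"] unfolding DD_def .
  have e4: "complex_of_real t powr \<beta> = exp (\<beta> * of_real (ln t))"
    using cpow_pos[OF t0(1)] .
  have e5: "complex_of_real (1 - t) powr (\<beta> - 1) = exp ((\<beta> - 1) * of_real (ln (1 - t)))"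
    using cpow_pos[OF t0(2)] .
  have A: "ff \<beta> t = exp ((\<beta> - 1) * of_real (ln R)) * of_real (t * XX t / DD t ^ 2)"
  proof -
    have "ff \<beta> t = exp (\<beta> * of_real (ln (XX t)) + (\<beta> - 1) * of_real (ln (YY t))
        - 2 * \<beta> * of_real (ln (DD t)) + \<beta> * of_real (ln t) + (\<beta> - 1) * of_real (ln (1 - t)))"
      unfolding ff_def e1 e2 e3 e4 e5 by (simp only: exp_add[symmetric] exp_diff[symmetric])
    also have "\<dots> = exp ((\<beta> - 1) * of_real (ln R) + of_real (ln t + ln (XX t) - 2 * ln (DD t)))"
      by (rule arg_cong[where f=exp]) (simp add: lnR algebra_simps)
    also have "\<dots> = exp ((\<beta> - 1) * of_real (ln R)) * of_real (t * XX t / DD t ^ 2)"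
      unfolding q exp_of_real[symmetric] exp_add ..
    finally show ?thesis .
  qed
  have B: "FF \<beta> (uu t) = exp ((\<beta> - 1) * of_real (ln R)) * of_real ((1/2) * (1 - om (uu t)))"
    unfolding FF_def uu_props(4)[OF t] R_def[symmetric] cpow_pos[OF Rpos] by simp
  have "complex_of_real KK * ff \<beta> t = exp ((\<beta> - 1) * of_real (ln R)) * of_real (KK * (t * XX t / DD t ^ 2))"
    unfolding A by simp
  also have "\<dots> = exp ((\<beta> - 1) * of_real (ln R)) * of_real ((SS t / DD t ^ 2) * ((1/2) * (1 - om (uu t))))"
    unfolding real_id[OF t] ..
  also have "\<dots> = \<bar>- SS t / DD t ^ 2\<bar> *\<^sub>R FF \<beta> (uu t)"
    unfolding B using p by (simp add: scaleR_conv_of_real)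
  finally show ?thesis .
qed

lemma om_bound:
  assumes "v \<in> {0<..<1}"
  shows "\<bar>om v\<bar> \<le> 1" "E0^2 - 4 * c * (v * (1 - v)) > 0"
proof -
  have vv: "v * (1 - v) \<le> 1/4" using zero_le_power2[of "v - 1/2"] by (simp add: power2_eq_square algebra_simps)
  have vv0: "v * (1 - v) > 0" using assms by simp
  have E: "E0^2 - c > 0" using E0_sq pos_basic[of 0] pos_basic[of 1] by simp
  have "c * (v * (1 - v)) \<le> c * (1/4)" using vv c_pos by (intro mult_left_mono) auto
  hence "4 * c * (v * (1 - v)) \<le> c" by simp
  thus pos: "E0^2 - 4 * c * (v * (1 - v)) > 0" using E by linarith
  have "(E0 * (2 * v - 1))^2 \<le> E0^2 - 4 * c * (v * (1 - v))"
  proof -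
    have "(E0 * (2 * v - 1))^2 = E0^2 - 4 * E0^2 * (v * (1 - v))" by (simp add: power2_eq_square algebra_simps)
    moreover have "4 * c * (v * (1 - v)) \<le> 4 * E0^2 * (v * (1 - v))"
      using E vv0 by (intro mult_right_mono) auto
    ultimately show ?thesis by linarith
  qed
  hence "sqrt ((E0 * (2 * v - 1))^2) \<le> sqrt (E0^2 - 4 * c * (v * (1 - v)))"
    by (rule real_sqrt_le_mono)
  hence "\<bar>E0 * (2 * v - 1)\<bar> \<le> sqrt (E0^2 - 4 * c * (v * (1 - v)))" by simp
  moreover have "sqrt (E0^2 - 4 * c * (v * (1 - v))) > 0" using pos by simp
  ultimately show "\<bar>om v\<bar> \<le> 1" unfolding om_def by (simp add: abs_div divide_le_eq_1)
qed

lemma om_reflect: "om (1 - v) = - om v"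
proof -
  have 1: "E0 * (2 * (1 - v) - 1) = - (E0 * (2 * v - 1))" by (simp add: algebra_simps)
  have 2: "(1 - v) * (1 - (1 - v)) = v * (1 - v)" by (simp add: algebra_simps)
  show ?thesis unfolding om_def 1 2 by simp
qed

lemma FF_integral:
  assumes b: "Re \<beta> > 0"
  shows "FF \<beta> absolutely_integrable_on {0<..<1}" "integral {0<..<1} (FF \<beta>) = Beta \<beta> \<beta> / 2"
proof -
  let ?P = "\<lambda>v. complex_of_real (v * (1 - v)) powr (\<beta> - 1)"
  let ?g = "\<lambda>v. (1/2) * (1 - complex_of_real (om v))"
  have FFeq: "FF \<beta> = (\<lambda>v. ?g v * ?P v)" by (auto simp: FF_def fun_eq_iff)
  have cont: "continuous_on {0<..<1} ?g"
  proof -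
    have nz: "sqrt (E0^2 - 4 * c * (v * (1 - v))) \<noteq> 0" if "v \<in> {0<..<1}" for v
      using om_bound(2)[OF that] by simp
    have "continuous_on {0<..<1} om"
      unfolding om_def by (intro continuous_intros) (use nz in auto)
    thus ?thesis by (intro continuous_intros) auto
  qed
  have bnd: "bounded (?g ` {0<..<1})"
  proof (rule boundedI[of _ 1])
    fix z assume "z \<in> ?g ` {0<..<1}"
    then obtain v where v: "v \<in> {0<..<1}" "z = ?g v" by auto
    have "norm (1 - complex_of_real (om v)) \<le> norm (1::complex) + norm (complex_of_real (om v))"
      by (rule norm_triangle_ineq4)
    also have "\<dots> \<le> 2" using om_bound(1)[OF v(1)] by simp
    finally have "norm (1 - complex_of_real (om v)) \<le> 2" .
    moreover have "norm z = norm (1 - complex_of_real (om v)) / 2" unfolding v(2) norm_mult by simp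
    ultimately show "norm z \<le> 1" by simp
  qed
  show ai: "FF \<beta> absolutely_integrable_on {0<..<1}"
    unfolding FFeq
    by (rule absolutely_integrable_bounded_measurable_product[OF bilinear_times
          continuous_imp_measurable_on_sets_lebesgue[OF cont] _ bnd Beta_sym_integral(1)[OF b]]) auto
  note r = reflect01[OF ai]
  have sum: "FF \<beta> v + FF \<beta> (1 - v) = ?P v" for v
  proof -
    have e: "(1 - v) * (1 - (1 - v)) = v * (1 - v)" by (simp add: algebra_simps)
    have g: "\<And>P w :: complex. 1/2 * P * (1 - w) + 1/2 * P * (1 - (- w)) = P"
      by (simp add: field_simps)
    show ?thesis unfolding FF_def om_reflect e of_real_minus by (rule g)
  qed
  have i1: "FF \<beta> integrable_on {0<..<1}" using ai set_lebesgue_integral_eq_integral(1) by blast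
  have i2: "(\<lambda>v. FF \<beta> (1 - v)) integrable_on {0<..<1}" using r(1) set_lebesgue_integral_eq_integral(1) by blast
  have "Beta \<beta> \<beta> = integral {0<..<1} ?P" using Beta_sym_integral(2)[OF b] by simp
  also have "\<dots> = integral {0<..<1} (\<lambda>v. FF \<beta> v + FF \<beta> (1 - v))" unfolding sum ..
  also have "\<dots> = integral {0<..<1} (FF \<beta>) + integral {0<..<1} (\<lambda>v. FF \<beta> (1 - v))"
    by (rule integral_add[OF i1 i2])
  also have "\<dots> = 2 * integral {0<..<1} (FF \<beta>)" unfolding r(2) by simp
  finally show "integral {0<..<1} (FF \<beta>) = Beta \<beta> \<beta> / 2" by simp
qed

lemma uu_dec:
  assumes "x \<in> {0..1}" "y \<in> {0..1}" "x < y"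
  shows "uu y < uu x"
proof (rule DERIV_neg_imp_decreasing[OF assms(3)])
  fix z assume z: "x \<le> z" "z \<le> y"
  hence zz: "z \<in> {0..1}" using assms by auto
  have "- SS z / DD z ^ 2 < 0" using SS_pos[OF zz] pos_basic(3)[OF zz] by simp
  thus "\<exists>d. DERIV uu z :> d \<and> d < 0" using uu_deriv[OF zz] by blast
qed

lemma uu_inj: "inj_on uu {0<..<1}"
proof (rule inj_onI)
  fix x y :: real assume xy: "x \<in> {0<..<1}" "y \<in> {0<..<1}" "uu x = uu y"
  show "x = y"
  proof (rule ccontr)
    assume "x \<noteq> y"
    hence "x < y \<or> y < x" by auto
    thus False using uu_dec[of x y] uu_dec[of y x] xy by auto
  qed
qed

lemma uu_image: "uu ` {0<..<1} = {0<..<1}"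
proof
  show "uu ` {0<..<1} \<subseteq> {0<..<1}" using uu_props(1,2) by auto
  show "{0<..<1} \<subseteq> uu ` {0<..<1}"
  proof
    fix y :: real assume y: "y \<in> {0<..<1}"
    have u0: "uu 0 = 1" using pos_basic(3)[of 0] by (simp add: uu_def XX_def DD_def power2_eq_square)
    have u1: "uu 1 = 0" by (simp add: uu_def)
    have cont: "\<forall>x. 0 \<le> x \<and> x \<le> 1 \<longrightarrow> isCont uu x"
      using uu_deriv DERIV_isCont by auto
    obtain x where x: "0 \<le> x" "x \<le> 1" "uu x = y"
      using IVT2[of uu 1 y 0, OF _ _ _ cont] u0 u1 y by auto
    have "x \<noteq> 0" "x \<noteq> 1" using x u0 u1 y by auto
    hence "x \<in> {0<..<1}" using x by auto
    thus "y \<in> uu ` {0<..<1}" using x(3) by blast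
  qed
qed

lemma main_ctx:
  assumes b: "Re \<beta> > 0"
  shows "ff \<beta> integrable_on {0..1} \<and>
         Gamma \<beta> * Gamma \<beta> / (2 * Gamma (2 * \<beta>)) = complex_of_real KK * integral {0..1} (ff \<beta>)"
proof -
  have der: "(uu has_field_derivative (- SS t / DD t ^ 2)) (at t within {0<..<1})"
    if "t \<in> {0<..<1}" for t
    using uu_deriv[of t] that by (auto intro: has_field_derivative_at_within)
  have cv: "(\<lambda>t. \<bar>- SS t / DD t ^ 2\<bar> *\<^sub>R FF \<beta> (uu t)) absolutely_integrable_on {0<..<1} \<and>
        integral {0<..<1} (\<lambda>t. \<bar>- SS t / DD t ^ 2\<bar> *\<^sub>R FF \<beta> (uu t)) = Beta \<beta> \<beta> / 2"
    using has_absolute_integral_change_of_variables_real[of "{0<..<1}" uu "\<lambda>t. - SS t / DD t ^ 2" "FF \<beta>"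
        "Beta \<beta> \<beta> / 2", OF _ der uu_inj] FF_integral[OF b] unfolding uu_image by auto
  hence "(\<lambda>t. \<bar>- SS t / DD t ^ 2\<bar> *\<^sub>R FF \<beta> (uu t)) integrable_on {0<..<1}"
    using set_lebesgue_integral_eq_integral(1) by blast
  hence "((\<lambda>t. \<bar>- SS t / DD t ^ 2\<bar> *\<^sub>R FF \<beta> (uu t)) has_integral (Beta \<beta> \<beta> / 2)) {0<..<1}"
    unfolding conjunct2[OF cv, symmetric] by (rule integrable_integral)
  hence "((\<lambda>t. complex_of_real KK * ff \<beta> t) has_integral (Beta \<beta> \<beta> / 2)) {0<..<1}"
    by (rule has_integral_cong[THEN iffD1, rotated]) (simp add: pointwise)
  hence "((\<lambda>t. (1 / complex_of_real KK) * (complex_of_real KK * ff \<beta> t)) has_integral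
           ((1 / complex_of_real KK) * (Beta \<beta> \<beta> / 2))) {0<..<1}"
    by (rule has_integral_mult_right)
  moreover have "KK \<noteq> 0" using KK_pos by simp
  ultimately have "(ff \<beta> has_integral ((1 / complex_of_real KK) * (Beta \<beta> \<beta> / 2))) {0<..<1}"
    by simp
  hence hi: "(ff \<beta> has_integral ((1 / complex_of_real KK) * (Beta \<beta> \<beta> / 2))) {0..1}"
    by (simp add: has_integral_Icc_iff_Ioo)
  have "2 * \<beta> = \<beta> + \<beta>" by simp
  hence "Gamma \<beta> * Gamma \<beta> / (2 * Gamma (2 * \<beta>)) = Beta \<beta> \<beta> / 2"
    by (simp add: Beta_def)
  also have "\<dots> = complex_of_real KK * integral {0..1} (ff \<beta>)"
    using integral_unique[OF hi] \<open>KK \<noteq> 0\<close> by simp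
  finally show ?thesis using hi by blast
qed

end

theorem mainTheorem9:
  fixes \<beta> :: complex and a c :: real
  assumes "Re \<beta> > 0"
    and "\<And>t. t \<in> {0..1} \<Longrightarrow> c - a * (a + t) > 0"
    and "\<And>t. t \<in> {0..1} \<Longrightarrow> c - (a + 1) * (a + t) > 0"
    and "\<And>t. t \<in> {0..1} \<Longrightarrow> c - (a + t)^2 > 0"
  shows "(\<lambda>t::real. (complex_of_real (c - a * (a + t)) powr \<beta>)
            * (complex_of_real (c - (a + 1) * (a + t)) powr (\<beta> - 1))
            / (complex_of_real (c - (a + t)^2) powr (2 * \<beta>))
            * (complex_of_real t powr \<beta>) * (complex_of_real (1 - t) powr (\<beta> - 1)))
           integrable_on {0..1}
     \<and> Gamma \<beta> * Gamma \<beta> / (2 * Gamma (2 * \<beta>)) =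
         complex_of_real (c - (a + 1)^2) *
         integral {0..1} (\<lambda>t::real. (complex_of_real (c - a * (a + t)) powr \<beta>)
            * (complex_of_real (c - (a + 1) * (a + t)) powr (\<beta> - 1))
            / (complex_of_real (c - (a + t)^2) powr (2 * \<beta>))
            * (complex_of_real t powr \<beta>) * (complex_of_real (1 - t) powr (\<beta> - 1)))"
proof -
  have e: "ff a c \<beta> = (\<lambda>t::real. (complex_of_real (c - a * (a + t)) powr \<beta>)
            * (complex_of_real (c - (a + 1) * (a + t)) powr (\<beta> - 1))
            / (complex_of_real (c - (a + t)^2) powr (2 * \<beta>))
            * (complex_of_real t powr \<beta>) * (complex_of_real (1 - t) powr (\<beta> - 1)))"
    by (rule ext) (simp only: ff_def[OF assms(2) assms(3) assms(4)])
  have k: "KK a c = c - (a + 1)^2" by (rule KK_def[OF assms(2) assms(3) assms(4)])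
  have m: "ff a c \<beta> integrable_on {0..1} \<and>
         Gamma \<beta> * Gamma \<beta> / (2 * Gamma (2 * \<beta>)) = complex_of_real (KK a c) * integral {0..1} (ff a c \<beta>)"
    by (rule main_ctx[OF assms(2) assms(3) assms(4) assms(1)])
  show ?thesis using m unfolding e k .
qed

end
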